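(* Let $n\ge1$ be an integer and write $n=2m+p$ with integers $m\ge0$ and $p\in\{0,1\}$ (when $p=0$ we have $m\ge1$). Let $R_n$ be the $n$-row rhombus of coins and $R_n^{\mathrm{flip}}$ its horizontal mirror image, as defined in the context. Then the minimum number of moves needed to turn $R_n$ into a translate of $R_n^{\mathrm{flip}}$ is $$\mu(R_n,R_n^{\mathrm{flip}})=\begin{cases}2T_m=m^2+m, & p=1,\\ T_m+T_{m-1}=m^2, & p=0.\end{cases}$$ In both cases this equals $\lfloor n^2/4\rfloor$.
   Context: For an integer $k\ge 0$, $T_k=k(k+1)/2$ is the $k$-th triangular number, so $T_0=0$. Coins are placed at points of the triangular lattice $L=\{a\mathbf u+b\mathbf v: a,b\in\mathbb Z\}\subset\mathbb R^2$, where $\mathbf u=(1,0)$ and $\mathbf v=(1/2,\sqrt3/2)$. The $n$-row rhombus of coins is $R_n=\{a\mathbf u+b\mathbf v: a,b\in\{0,1,\dots,n-1\}\}$. It has $n^2$ coins. Its horizontal flip is $R_n^{\mathrm{flip}}=\{(-x,y):(x,y)\in R_n\}$, the mirror image of $R_n$ in a vertical line. This set is again contained in $L$. A move takes a single coin and places it at any other position. For finite sets $S,S'\subset\mathbb R^2$ with $|S|=|S'|$, the minimum number of moves to transform $S$ into some translate of $S'$ is $\mu(S,S')=|S|-\max_{t\in\mathbb R^2}|S\cap(S'+t)|$. Coins in the overlap stay in place, and each remaining coin is moved once. *)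

theory Defs
  imports Complex_Main
begin

definition tri :: "nat \<Rightarrow> nat" where
  "tri k = k * (k + 1) div 2"

definition lattice_pt :: "int \<Rightarrow> int \<Rightarrow> real \<times> real" where
  "lattice_pt a b = (real_of_int a + real_of_int b / 2, real_of_int b * sqrt 3 / 2)"

definition rhombus :: "nat \<Rightarrow> (real \<times> real) set" where
  "rhombus n = {lattice_pt (int a) (int b) | a b. a < n \<and> b < n}"

definition hflip :: "(real \<times> real) set \<Rightarrow> (real \<times> real) set" where
  "hflip S = (\<lambda>(x, y). (- x, y)) ` S"

definition translate :: "real \<times> real \<Rightarrow> (real \<times> real) set \<Rightarrow> (real \<times> real) set" where
  "translate t S = (\<lambda>(x, y). (x + fst t, y + snd t)) ` S"

definition moves :: "(real \<times> real) set \<Rightarrow> (real \<times> real) set \<Rightarrow> nat" where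
  "moves S S' = card S - Max {card (S \<inter> translate t S') | t. True}"

end

theory Submission imports Defs begin

lemma S1: "(\<Sum>b<n. \<bar>int n - 1 - 2 * int b\<bar>) = 2 * int (n^2 div 4)"
proof (induction n rule: less_induct)
  case (less n)
  show ?case
  proof (cases n)
    case 0 then show ?thesis by simp
  next
    case (Suc n1)
    show ?thesis
    proof (cases n1)
      case 0 then show ?thesis using Suc by simp
    next
      case (Suc k)
      have IH: "(\<Sum>b<k. \<bar>int k - 1 - 2 * int b\<bar>) = 2 * int (k^2 div 4)"
        using less Suc \<open>n = Suc n1\<close> by simp
      have "(\<Sum>b<Suc (Suc k). \<bar>int (Suc (Suc k)) - 1 - 2 * int b\<bar>)
          = \<bar>int k + 1\<bar> + (\<Sum>b<Suc k. \<bar>int k - 1 - 2 * int b\<bar>)"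
        by (subst sum.lessThan_Suc_shift) (simp add: algebra_simps)
      also have "\<dots> = 2 * (int k + 1) + (\<Sum>b<k. \<bar>int k - 1 - 2 * int b\<bar>)"
        by simp
      also have "\<dots> = 2 * int ((Suc (Suc k))^2 div 4)"
      proof -
        have "(Suc (Suc k))^2 = k^2 + 4 * (k+1)" by (simp add: power2_eq_square algebra_simps)
        then have "(Suc (Suc k))^2 div 4 = k^2 div 4 + (k+1)" by simp
        then show ?thesis using IH by simp
      qed
      finally show ?thesis using Suc \<open>n = Suc n1\<close> by simp
    qed
  qed
qed

lemma pair_sum: "2 * (\<Sum>b<n. (f b::int)) = (\<Sum>b<n. f b + f (n - Suc b))"
  by (simp add: sum.distrib sum.nat_diff_reindex)

lemma P_lower: "(\<Sum>b<n. min (int n) \<bar>c - int b\<bar>) \<ge> int (n^2 div 4)"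
proof -
  have pt: "min (int n) \<bar>c - int b\<bar> + min (int n) \<bar>c - int (n - Suc b)\<bar> \<ge> \<bar>int n - 1 - 2 * int b\<bar>"
    if "b < n" for b
  proof -
    have e: "int (n - Suc b) = int n - 1 - int b" using that by simp
    show ?thesis unfolding e using that by (simp add: min_def abs_if) 
  qed
  have "2 * (\<Sum>b<n. min (int n) \<bar>c - int b\<bar>) \<ge> (\<Sum>b<n. \<bar>int n - 1 - 2 * int b\<bar>)"
    unfolding pair_sum by (rule sum_mono) (use pt in auto)
  then show ?thesis using S1 by simp
qed

lemma P_eq: "(\<Sum>b<n. min (int n) \<bar>int (n div 2) - int b\<bar>) = int (n^2 div 4)"
proof -
  have pt: "min (int n) \<bar>int (n div 2) - int b\<bar> + min (int n) \<bar>int (n div 2) - int (n - Suc b)\<bar> = \<bar>int n - 1 - 2 * int b\<bar>"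
    if "b < n" for b
  proof -
    have e: "int (n - Suc b) = int n - 1 - int b" using that by simp
    obtain m q where "n = 2*m + q" "q < 2" using div_mod_decomp[of n 2] by (metis mod_less_divisor zero_less_numeral mult.commute)
    then have h: "int n = 2 * int m + int q" "int (n div 2) = int m" "q = 0 \<or> q = 1" by auto
    have "int b < int n" using that by simp
    then show ?thesis unfolding e h(2) using h(1,3) by (auto simp add: min_def abs_if split: if_splits; presburger)
  qed
  have "2 * (\<Sum>b<n. min (int n) \<bar>int (n div 2) - int b\<bar>) = (\<Sum>b<n. \<bar>int n - 1 - 2 * int b\<bar>)"
    unfolding pair_sum by (rule sum.cong) (use pt in auto)
  then show ?thesis using S1 by simp
qed

lemma tri2: "2 * tri k = k * (k+1)"
  unfolding tri_def by simp


definition Zs :: "nat \<Rightarrow> (int \<times> int) set" where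
  "Zs n = {0..<int n} \<times> {0..<int n}"

definition lp :: "int \<times> int \<Rightarrow> real \<times> real" where
  "lp x = lattice_pt (snd x) (fst x)"

lemma lp_inj: "inj lp"
proof (rule injI)
  fix x y assume "lp x = lp y"
  then have 1: "real_of_int (snd x) + real_of_int (fst x) / 2 = real_of_int (snd y) + real_of_int (fst y) / 2"
   and 2: "real_of_int (fst x) * sqrt 3 / 2 = real_of_int (fst y) * sqrt 3 / 2"
    unfolding lp_def lattice_pt_def by auto
  from 2 have "fst x = fst y" by simp
  with 1 have "snd x = snd y" by simp
  then show "x = y" using \<open>fst x = fst y\<close> by (simp add: prod_eq_iff)
qed

lemma rh: "rhombus n = lp ` Zs n"
proof (rule set_eqI, rule iffI)
  fix p assume "p \<in> rhombus n"
  then obtain a b where "p = lattice_pt (int a) (int b)" "a < n" "b < n" unfolding rhombus_def by auto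
  then show "p \<in> lp ` Zs n" unfolding Zs_def lp_def by (intro image_eqI[of _ _ "(int b, int a)"]) auto
next
  fix p assume "p \<in> lp ` Zs n"
  then obtain b a where "p = lp (b,a)" "0 \<le> a" "a < int n" "0 \<le> b" "b < int n" unfolding Zs_def by auto
  then show "p \<in> rhombus n" unfolding rhombus_def lp_def
    by (intro CollectI exI[of _ "nat a"] exI[of _ "nat b"]) auto
qed

lemma flip_lp: "hflip (lp ` A) = lp ` ((\<lambda>(b,a). (b, -a-b)) ` A)"
  unfolding hflip_def image_image
  by (rule image_cong) (auto simp: lp_def lattice_pt_def field_simps)

lemma trans_lp: "translate (lp (u,s)) (lp ` A) = lp ` ((\<lambda>(b,a). (b+u, a+s)) ` A)"
  unfolding translate_def image_image
  by (rule image_cong) (auto simp: lp_def lattice_pt_def field_simps)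

lemma lp_diff: "lp (b,a) = (fst (lp (b',a')) + fst t, snd (lp (b',a')) + snd t) \<Longrightarrow> t = lp (b-b', a-a')"
  by (cases t) (auto simp: lp_def lattice_pt_def field_simps)

definition Tz :: "nat \<Rightarrow> int \<Rightarrow> int \<Rightarrow> (int \<times> int) set" where
  "Tz n u s = {(b,a). 0 \<le> b - u \<and> b - u < int n \<and> 0 \<le> s + u - a - b \<and> s + u - a - b < int n}"

lemma Tz_eq: "(\<lambda>(b,a). (b+u, a+s)) ` ((\<lambda>(b,a). (b, -a-b)) ` Zs n) = Tz n u s"
proof (rule set_eqI, rule iffI)
  fix x assume "x \<in> (\<lambda>(b,a). (b+u, a+s)) ` ((\<lambda>(b,a). (b, -a-b)) ` Zs n)"
  then show "x \<in> Tz n u s" unfolding Zs_def Tz_def by auto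
next
  fix x assume "x \<in> Tz n u s"
  then obtain b a where x: "x = (b,a)" "0 \<le> b - u" "b - u < int n" "0 \<le> s + u - a - b" "s + u - a - b < int n"
    unfolding Tz_def by auto
  show "x \<in> (\<lambda>(b,a). (b+u, a+s)) ` ((\<lambda>(b,a). (b, -a-b)) ` Zs n)"
    unfolding image_image
    by (rule image_eqI[of _ _ "(b-u, s+u-a-b)"]) (use x in \<open>auto simp: Zs_def\<close>)
qed

definition Wset :: "nat \<Rightarrow> int \<Rightarrow> (int \<times> int) set" where
  "Wset n k = {x \<in> Zs n. k - int n < snd x + fst x \<and> snd x + fst x \<le> k}"

lemma Wset_sigma: "Wset n k = (SIGMA b:{0..<int n}. {max 0 (k - int n - b + 1) .. min (int n - 1) (k - b)})"
  unfolding Wset_def Zs_def by auto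

lemma sum_int_nat: "sum g {0..<int n} = (\<Sum>b<n. g (int b))"
proof -
  have "{0..<int n} = int ` {..<n}" using image_int_atLeastLessThan[of 0 n] by (simp add: lessThan_atLeast0)
  then show ?thesis by (simp add: sum.reindex)
qed

lemma card_Wset: "int (card (Wset n k)) = int n * int n - (\<Sum>b<n. min (int n) \<bar>(k - int n + 1) - int b\<bar>)"
proof -
  have row: "int (card {max 0 (k - int n - b + 1) .. min (int n - 1) (k - b)}) = int n - min (int n) \<bar>(k - int n + 1) - b\<bar>" for b
    by (simp add: min_def max_def abs_if)
  have "int (card (Wset n k)) = (\<Sum>b\<in>{0..<int n}. int (card {max 0 (k - int n - b + 1) .. min (int n - 1) (k - b)}))"
    unfolding Wset_sigma by (subst card_SigmaI) auto
  also have "\<dots> = (\<Sum>b\<in>{0..<int n}. int n - min (int n) \<bar>(k - int n + 1) - b\<bar>)"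
    using row by simp
  also have "\<dots> = (\<Sum>b<n. int n - min (int n) \<bar>(k - int n + 1) - int b\<bar>)" by (rule sum_int_nat)
  also have "\<dots> = int n * int n - (\<Sum>b<n. min (int n) \<bar>(k - int n + 1) - int b\<bar>)"
    by (simp add: sum_subtractf)
  finally show ?thesis .
qed


lemma card_lp: "card (lp ` A) = card A"
  by (metis card_image inj_on_subset lp_inj subset_UNIV)

lemma overlap_bound: "card (rhombus n \<inter> translate t (hflip (rhombus n))) \<le> n^2 - n^2 div 4"
proof (cases "rhombus n \<inter> translate t (hflip (rhombus n)) = {}")
  case True then show ?thesis by simp
next
  case False
  then obtain p where p1: "p \<in> lp ` Zs n" and p2: "p \<in> translate t (lp ` ((\<lambda>(b,a). (b, -a-b)) ` Zs n))"
    unfolding rh flip_lp by blast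
  from p1 obtain b a where pe: "p = lp (b,a)" by auto
  from p2 obtain q where q1: "q \<in> lp ` ((\<lambda>(b,a). (b, -a-b)) ` Zs n)"
     and q2: "p = (case q of (x, y) \<Rightarrow> (x + fst t, y + snd t))"
    unfolding translate_def by blast
  from q2 have q3: "p = (fst q + fst t, snd q + snd t)" by (cases q) simp
  note q = q1 q3
  then obtain b' a' where "q = lp (b',a')" by auto
  with q pe have t: "t = lp (b-b', a-a')" using lp_diff by simp
  define u where "u = b - b'"
  define s where "s = a - a'"
  have "rhombus n \<inter> translate t (hflip (rhombus n)) = lp ` (Zs n \<inter> Tz n u s)"
    unfolding rh flip_lp t u_def[symmetric] s_def[symmetric] trans_lp Tz_eq
    by (simp add: image_Int[OF lp_inj])
  then have "card (rhombus n \<inter> translate t (hflip (rhombus n))) = card (Zs n \<inter> Tz n u s)"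
    by (simp add: card_lp)
  also have "\<dots> \<le> card (Wset n (s+u))"
    by (rule card_mono) (auto simp: Wset_def Zs_def Tz_def)
  finally have c: "int (card (rhombus n \<inter> translate t (hflip (rhombus n)))) \<le> int (card (Wset n (s+u)))"
    by simp
  have "int (card (Wset n (s+u))) \<le> int n * int n - int (n^2 div 4)"
    unfolding card_Wset using P_lower[of n] by simp
  moreover have "int (n^2 - n^2 div 4) = int n * int n - int (n^2 div 4)"
    by (simp add: of_nat_diff power2_eq_square)
  ultimately have "int (card (rhombus n \<inter> translate t (hflip (rhombus n)))) \<le> int (n^2 - n^2 div 4)"
    using c by linarith
  then show ?thesis by linarith
qed

lemma overlap_attain: "card (rhombus n \<inter> translate (lp (0, int (n div 2) + int n - 1)) (hflip (rhombus n))) = n^2 - n^2 div 4"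
proof -
  define k where "k = int (n div 2) + int n - 1"
  have "rhombus n \<inter> translate (lp (0, k)) (hflip (rhombus n)) = lp ` (Zs n \<inter> Tz n 0 k)"
    unfolding rh flip_lp trans_lp Tz_eq
    by (simp add: image_Int[OF lp_inj])
  also have "Zs n \<inter> Tz n 0 k = Wset n k"
    by (auto simp: Wset_def Zs_def Tz_def)
  finally have "card (rhombus n \<inter> translate (lp (0, k)) (hflip (rhombus n))) = card (Wset n k)"
    by (simp add: card_lp)
  moreover have "int (card (Wset n k)) = int n * int n - int (n^2 div 4)"
    unfolding card_Wset k_def using P_eq[of n] by simp
  moreover have "int (n^2 - n^2 div 4) = int n * int n - int (n^2 div 4)"
    by (simp add: of_nat_diff power2_eq_square)
  ultimately show ?thesis unfolding k_def by linarith
qed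

lemma card_rh: "card (rhombus n) = n^2"
proof -
  have "card (rhombus n) = card (Zs n)" unfolding rh by (simp add: card_lp)
  then show ?thesis unfolding Zs_def by (simp add: power2_eq_square)
qed

lemma moves_val: "moves (rhombus n) (hflip (rhombus n)) = n^2 div 4"
proof -
  let ?M = "{card (rhombus n \<inter> translate t (hflip (rhombus n))) | t. True}"
  have "Max ?M = n^2 - n^2 div 4"
  proof (rule Max_eqI)
    show "finite ?M"
      by (rule finite_subset[of _ "{..n^2}"]) (use overlap_bound in \<open>auto intro: order_trans[OF _ diff_le_self]\<close>)
    show "y \<le> n^2 - n^2 div 4" if "y \<in> ?M" for y using that overlap_bound by auto
    show "n^2 - n^2 div 4 \<in> ?M" using overlap_attain by (metis (mono_tags, lifting) mem_Collect_eq)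
  qed
  then show ?thesis unfolding moves_def card_rh by simp
qed

theorem mainTheorem2:
  fixes n m p :: nat
  assumes "n \<ge> 1" and "n = 2 * m + p" and "p \<in> {0, 1}"
  shows "moves (rhombus n) (hflip (rhombus n)) =
           (if p = 1 then 2 * tri m else tri m + tri (m - 1))
       \<and> moves (rhombus n) (hflip (rhombus n)) = n ^ 2 div 4"
proof -
  have "n^2 div 4 = (if p = 1 then 2 * tri m else tri m + tri (m - 1))"
  proof (cases "p = 1")
    case True
    then have "n^2 = 4 * (m*m + m) + 1" using assms(2) by (simp add: power2_eq_square algebra_simps)
    then have "n^2 div 4 = m*m + m" by simp
    then show ?thesis using True tri2[of m] by simp
  next
    case False
    then have p0: "p = 0" using assms(3) by simp
    then obtain j where j: "m = Suc j" using assms(1,2) by (cases m) auto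
    have "n^2 = 4 * (m*m)" using assms(2) p0 by (simp add: power2_eq_square algebra_simps)
    then have "n^2 div 4 = m*m" by simp
    moreover have "2 * (tri m + tri (m - 1)) = 2 * (m*m)"
      using tri2[of m] tri2[of j] j by (simp add: algebra_simps)
    ultimately show ?thesis using False by simp
  qed
  then show ?thesis using moves_val by simp
qed

end
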